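(* Let $h:\mathbb{R}\to\mathbb{R}$ be of class $C^2$. Let $\mathcal{H}_0=\{(x,\varPhi)\in\mathbb{R}^2 \mid \varPhi>0,\ \varPhi^2\neq h(x)\}$ and equip it with the Riemannian metric \[ g_h=\frac{\left(h(x)-\varPhi^2\right)^2dx^2+d\varPhi^2}{\varPhi^2}. \] Then on the whole domain $\mathcal{H}_0$ the metric $g_h$ has constant sectional curvature equal to $-1$; i.e., it everywhere describes hyperbolic geometry.
   Context: $\mathcal{H}=\{(x,\varPhi)\in\mathbb{R}^2\mid \varPhi>0\}$ is the upper half plane. The expression for $g_h$ is degenerate exactly where $\varPhi^2=h(x)$, which is why these points are removed; the Riemannian manifold $\mathbb{M}_h=(\mathcal{H}_0,g_h)$ is called the Linear-$2^{\mathrm{nd}}$-order-ODE upper half plane. *)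

theory Defs
  imports "HOL-Analysis.Analysis"
begin

text \<open>Local coordinates on a chart of R^2: points are pairs (x, y); coordinate
  index 0 is x, index 1 is y.  A metric is given by its component functions
  g i j (i, j in {0,1}).\<close>

definition pd :: "nat \<Rightarrow> (real \<times> real \<Rightarrow> real) \<Rightarrow> real \<times> real \<Rightarrow> real" where
  "pd i f p = (if i = 0 then deriv (\<lambda>t. f (t, snd p)) (fst p)
                        else deriv (\<lambda>t. f (fst p, t)) (snd p))"

definition met_det :: "(nat \<Rightarrow> nat \<Rightarrow> real \<times> real \<Rightarrow> real) \<Rightarrow> real \<times> real \<Rightarrow> real" where
  "met_det g p = g 0 0 p * g 1 1 p - g 0 1 p * g 1 0 p"

definition met_inv :: "(nat \<Rightarrow> nat \<Rightarrow> real \<times> real \<Rightarrow> real) \<Rightarrow> nat \<Rightarrow> nat \<Rightarrow> real \<times> real \<Rightarrow> real" where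
  "met_inv g i j p =
     (if i = 0 \<and> j = 0 then g 1 1 p / met_det g p
      else if i = 1 \<and> j = 1 then g 0 0 p / met_det g p
      else - g i j p / met_det g p)"

definition christoffel :: "(nat \<Rightarrow> nat \<Rightarrow> real \<times> real \<Rightarrow> real) \<Rightarrow> nat \<Rightarrow> nat \<Rightarrow> nat \<Rightarrow> real \<times> real \<Rightarrow> real" where
  "christoffel g k i j p =
     (\<Sum>l<2. met_inv g k l p * (pd i (g j l) p + pd j (g i l) p - pd l (g i j) p)) / 2"

text \<open>Riemann tensor R^l_{ijk}, with R(d_i,d_j) d_k = sum_l R^l_{ijk} d_l and
  R(X,Y) = nabla_X nabla_Y - nabla_Y nabla_X - nabla_[X,Y].\<close>
definition riemann :: "(nat \<Rightarrow> nat \<Rightarrow> real \<times> real \<Rightarrow> real) \<Rightarrow> nat \<Rightarrow> nat \<Rightarrow> nat \<Rightarrow> nat \<Rightarrow> real \<times> real \<Rightarrow> real" where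
  "riemann g l i j k p =
     pd i (christoffel g l j k) p - pd j (christoffel g l i k) p
     + (\<Sum>m<2. christoffel g l i m p * christoffel g m j k p
              - christoffel g l j m p * christoffel g m i k p)"

text \<open>Sectional curvature of the (unique) tangent plane of a 2-dimensional
  Riemannian manifold: K = <R(d_0,d_1)d_1, d_0> / (|d_0|^2 |d_1|^2 - <d_0,d_1>^2).\<close>
definition sectional_curvature :: "(nat \<Rightarrow> nat \<Rightarrow> real \<times> real \<Rightarrow> real) \<Rightarrow> real \<times> real \<Rightarrow> real" where
  "sectional_curvature g p = (\<Sum>l<2. riemann g l 0 1 1 p * g l 0 p) / met_det g p"

definition g_h :: "(real \<Rightarrow> real) \<Rightarrow> nat \<Rightarrow> nat \<Rightarrow> real \<times> real \<Rightarrow> real" where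
  "g_h h i j p = (let x = fst p; \<Phi> = snd p in
     if i = 0 \<and> j = 0 then (h x - \<Phi>^2)^2 / \<Phi>^2
     else if i = 1 \<and> j = 1 then 1 / \<Phi>^2
     else 0)"

definition H0 :: "(real \<Rightarrow> real) \<Rightarrow> (real \<times> real) set" where
  "H0 h = {(x, \<Phi>). \<Phi> > 0 \<and> \<Phi>^2 \<noteq> h x}"

end

theory Submission
  imports Defs
begin

lemma sum2: "(\<Sum>l<(2::nat). F l) = F 0 + (F 1 :: real)"
  by (simp add: numeral_2_eq_2)

lemma gh_simps:
  "g_h h 0 0 (x,y) = (h x - y^2)^2/y^2"
  "g_h h 1 1 (x,y) = 1/y^2"
  "g_h h 0 1 = (\<lambda>p. 0)"
  "g_h h 1 0 = (\<lambda>p. 0)"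
  "g_h h (Suc 0) (Suc 0) (x,y) = 1/y^2"
  "g_h h 0 (Suc 0) = (\<lambda>p. 0)"
  "g_h h (Suc 0) 0 = (\<lambda>p. 0)"
  by (auto simp: g_h_def fun_eq_iff)

lemma pd0: "pd 0 f (x,y) = deriv (\<lambda>t. f (t,y)) x" by (simp add: pd_def)
lemma pd1: "pd 1 f (x,y) = deriv (\<lambda>t. f (x,t)) y" by (simp add: pd_def)

lemma pd_zero: "pd i (\<lambda>p. 0) p = 0"
  by (simp add: pd_def)

lemma pd0_g11: "pd 0 (g_h h 1 1) (x,y) = 0"
  by (simp add: pd0 gh_simps)

lemma pd1_g11: "y \<noteq> 0 \<Longrightarrow> pd 1 (g_h h 1 1) (x,y) = -2/y^3"
  unfolding pd1 gh_simps
  apply (rule DERIV_imp_deriv)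
  apply (rule derivative_eq_intros refl | simp)+
  apply (simp add: field_simps power_eq_if)
  done

lemma pd1_g00: "y \<noteq> 0 \<Longrightarrow> pd 1 (g_h h 0 0) (x,y) = -2*(h x)^2/y^3 + 2*y"
proof -
  assume y: "y \<noteq> 0"
  have e: "(\<lambda>t. g_h h 0 0 (x,t)) = (\<lambda>t. (h x - t^2)^2/t^2)" by (simp add: gh_simps)
  show ?thesis
  unfolding pd1 e
  apply (rule DERIV_imp_deriv)
  apply (rule derivative_eq_intros refl | simp add: y)+
  using y apply (simp add: field_simps power_eq_if)
  done
qed

lemma det_gh: "met_det (g_h h) (x,y) = (h x - y^2)^2/y^4"
  by (simp add: met_det_def gh_simps field_simps power_eq_if)

lemma inv_simps:
  "met_inv g 0 1 p = - g 0 1 p / met_det g p"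
  "met_inv g 1 0 p = - g 1 0 p / met_det g p"
  "met_inv g 0 0 p = g 1 1 p / met_det g p"
  "met_inv g 1 1 p = g 0 0 p / met_det g p"
  "met_inv g 0 (Suc 0) p = - g 0 1 p / met_det g p"
  "met_inv g (Suc 0) 0 p = - g 1 0 p / met_det g p"
  "met_inv g (Suc 0) (Suc 0) p = g 0 0 p / met_det g p"
  by (simp_all add: met_inv_def)

lemmas pd_S = pd0_g11[unfolded One_nat_def]
  pd1_g11[unfolded One_nat_def] pd1_g00[unfolded One_nat_def]

lemma G011: "christoffel (g_h h) 0 1 1 p = 0"
  by (cases p) (simp add: christoffel_def sum2 inv_simps gh_simps pd_zero pd0_g11 pd_S)

lemma G101: "christoffel (g_h h) 1 0 1 p = 0"
  by (cases p) (simp add: christoffel_def sum2 inv_simps gh_simps pd_zero pd0_g11 pd_S)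

lemma aux1: "y \<noteq> 0 \<Longrightarrow> c - y^2 \<noteq> (0::real) \<Longrightarrow> ((c-y^2)^2/y^2)/((c-y^2)^2/y^4) = y^2"
proof -
  assume a: "y \<noteq> 0" "c - y^2 \<noteq> (0::real)"
  have g: "A \<noteq> 0 \<Longrightarrow> (A/y^2)/(A/y^4) = y^2" for A :: real
    using a(1) by (simp add: field_simps power_eq_if)
  have "(c-y^2)^2 \<noteq> 0" using a by simp
  then show ?thesis by (rule g)
qed
lemma aux3: "y \<noteq> 0 \<Longrightarrow> y^2 \<noteq> (c::real) \<Longrightarrow>
  y ^ 4 * (2 * y - 2 * c\<^sup>2 / y ^ 3) / (y\<^sup>2 * (c - y\<^sup>2)\<^sup>2 * 2) = (y\<^sup>2 + c) / (y * (y\<^sup>2 - c))"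
proof -
  assume a: "y \<noteq> 0" "y^2 \<noteq> (c::real)"
  have e: "y ^ 4 * (2 * y - 2 * c\<^sup>2 / y ^ 3) = 2*y*(y^4-c^2)"
    using a by (simp add: field_simps power_eq_if)
  have d1: "y\<^sup>2 * (c - y\<^sup>2)\<^sup>2 * 2 \<noteq> 0" using a by simp
  have d2: "y * (y\<^sup>2 - c) \<noteq> 0" using a by simp
  show ?thesis unfolding e using d1 d2 by (simp add: frac_eq_eq) algebra
qed
lemma aux2: "y \<noteq> 0 \<Longrightarrow> c - y^2 \<noteq> (0::real) \<Longrightarrow> (1/y^2)/((c-y^2)^2/y^4) = y^2/(c-y^2)^2"
  by (simp add: field_simps power_eq_if)

lemma G111: "y > 0 \<Longrightarrow> y^2 \<noteq> h x \<Longrightarrow> christoffel (g_h h) 1 1 1 (x,y) = -1/y"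
  by (simp add: christoffel_def sum2 inv_simps gh_simps pd_zero pd0_g11 pd1_g11 pd_S det_gh aux1 aux2)
     (simp add: field_simps power_eq_if)

lemma G001: "y > 0 \<Longrightarrow> y^2 \<noteq> h x \<Longrightarrow>
   christoffel (g_h h) 0 0 1 (x,y) = (y^2 + h x)/(y*(y^2 - h x))"
  by (simp add: christoffel_def sum2 inv_simps gh_simps pd_zero pd0_g11 pd1_g00 pd_S det_gh aux1 aux2)
     (simp add: aux3)

lemma G010: "y > 0 \<Longrightarrow> y^2 \<noteq> h x \<Longrightarrow>
   christoffel (g_h h) 0 1 0 (x,y) = (y^2 + h x)/(y*(y^2 - h x))"
  by (simp add: christoffel_def sum2 inv_simps gh_simps pd_zero pd0_g11 pd1_g00 pd_S det_gh aux1 aux2)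
     (simp add: aux3)

lemma G011f: "christoffel (g_h h) 0 1 1 = (\<lambda>p. 0)" using G011 by blast

lemma dG: assumes "y > 0" "y^2 \<noteq> h x"
  shows "pd 1 (christoffel (g_h h) 0 0 1) (x,y) =
     ((h x)^2 - y^4 - 4*h x*y^2)/(y*(y^2 - h x))^2"
proof -
  define c where "c = h x"
  define S where "S = {t::real. 0 < t \<and> t^2 \<noteq> c}"
  have oS: "open S" unfolding S_def
    by (intro open_Collect_conj open_Collect_less open_Collect_neq continuous_intros)
  have yS: "y \<in> S" using assms by (simp add: S_def c_def)
  have eq: "t \<in> S \<Longrightarrow> (t^2 + c)/(t*(t^2 - c)) = christoffel (g_h h) 0 0 1 (x,t)" for t
    unfolding S_def c_def using G001[of t h x] by auto
  have d: "((\<lambda>t. (t^2 + c)/(t*(t^2 - c))) has_field_derivative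
      (c^2 - y^4 - 4*c*y^2)/(y*(y^2 - c))^2) (at y)"
    apply (rule derivative_eq_intros refl)+
    using assms apply (simp add: c_def)
    apply (simp only: power2_eq_square[of "y * (y\<^sup>2 - c)"])
    apply (rule arg_cong[where f="\<lambda>n. n / _"])
    apply (simp add: power2_eq_square power4_eq_xxxx)
    apply algebra
    done
  have "((\<lambda>t. christoffel (g_h h) 0 0 1 (x,t)) has_field_derivative
      (c^2 - y^4 - 4*c*y^2)/(y*(y^2 - c))^2) (at y)"
    by (rule has_field_derivative_transform_within_open[OF d oS yS eq])
  then show ?thesis unfolding pd1 c_def by (rule DERIV_imp_deriv)
qed

lemmas GS = G001[unfolded One_nat_def] G010[unfolded One_nat_def] G111[unfolded One_nat_def]
  dG[unfolded One_nat_def] G011f[unfolded One_nat_def]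

lemma fa0: fixes y u :: real assumes "u \<noteq> 0" "y \<noteq> 0"
  shows "(- ((y\<^sup>2 + (y^2-u)) * (y\<^sup>2 + (y^2-u)) / (y * (y\<^sup>2 - (y^2-u)) * (y * (y\<^sup>2 - (y^2-u))))) -
         (y\<^sup>2 + (y^2-u)) / (y * (y\<^sup>2 - (y^2-u)) * y) -
         ((y^2-u)\<^sup>2 - y ^ 4 - 4 * (y^2-u) * y\<^sup>2) / (y * (y\<^sup>2 - (y^2-u)))\<^sup>2) *
        y ^ 4 / y\<^sup>2 = - 1"
  using assms by (simp add: field_simps) algebra
lemma fa: fixes y c :: real assumes "y^2 \<noteq> c" "y \<noteq> 0"
  shows "(- ((y\<^sup>2 + c) * (y\<^sup>2 + c) / (y * (y\<^sup>2 - c) * (y * (y\<^sup>2 - c)))) -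
         (y\<^sup>2 + c) / (y * (y\<^sup>2 - c) * y) -
         (c\<^sup>2 - y ^ 4 - 4 * c * y\<^sup>2) / (y * (y\<^sup>2 - c))\<^sup>2) *
        y ^ 4 / y\<^sup>2 = - 1"
  using fa0[of "y^2 - c" y] assms by simp

theorem lemma2p3:
  fixes h :: "real \<Rightarrow> real"
  assumes C2: "\<exists>h' h''. (\<forall>x. (h has_real_derivative h' x) (at x))
                      \<and> (\<forall>x. (h' has_real_derivative h'' x) (at x))
                      \<and> continuous_on UNIV h''"
  shows "\<forall>p \<in> H0 h. sectional_curvature (g_h h) p = -1"
proof
  fix p assume "p \<in> H0 h"
  then obtain x y where p: "p = (x,y)" and y: "y > 0" "y^2 \<noteq> h x" by (auto simp: H0_def)
  show "sectional_curvature (g_h h) p = -1"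
    unfolding p sectional_curvature_def riemann_def sum2
    using y
    apply (simp add: G011f G011[unfolded One_nat_def] G101[unfolded One_nat_def] G011 G101 pd_zero gh_simps
       GS det_gh)
    using fa[of y "h x"] by simp
qed

end
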